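(* Let $\hat\mu_n=F(\hat m_n^1,\dots,\hat m_n^{l_1},m_n^{l_1+1},\dots,m_n^{l_1+l_2})$ be a moment-type estimator as in the context (conditions (i)–(iii)), and suppose in addition that $F$ is uniformly locally linearly approximable: there exist $N$, $C>0$, $\epsilon>0$ and, for each $n$, a matrix $dF_{m_n}\in\mathbb{R}^{k\times l_1}$ such that for all $n\ge N$ and all $\tilde m_{r}=(\tilde m^1,\dots,\tilde m^{l_1})'$ with $\|\tilde m_r-m_{n,r}\|_2^2<\epsilon$, $$\|F(\tilde m^1,\dots,\tilde m^{l_1},m_n^{l_1+1},\dots,m_n^{l_1+l_2})-F(m_n)-dF_{m_n}(\tilde m_r-m_{n,r})\|_2\le C\|\tilde m_r-m_{n,r}\|_2^2,$$ where $m_n=(m_n^1,\dots,m_n^{l_1+l_2})$ and $m_{n,r}=(m_n^1,\dots,m_n^{l_1})'$. Define the linearization $\hat\mu_n^L=F(m_n)+dF_{m_n}(\hat m_{n,r}-m_{n,r})$ with $\hat m_{n,r}=(\hat m_n^1,\dots,\hat m_n^{l_1})'$. If $|||\mathbf{D}|||_2/n\to0$, then $$\hat\mu_n-\hat\mu_n^L=o_p\Big(\sqrt{|||\mathbf{D}|||_2/n}\Big)=o_p(1),$$ and $$\mathrm{Var}(\hat\mu_n^L)=\frac1{n^2}z'\mathbf{D}z,\qquad z=\Big(\sum_{s=1}^{l_1}dF^s_{m_n}1_{kn}'\,\mathrm{diag}(\phi^s)\Big)'\in\mathbb{R}^{kn\times k},$$ where $dF^s_{m_n}\in\mathbb{R}^{k}$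 is the $s$-th column of $dF_{m_n}$. Moreover, if $\frac1n\|z\|_2^2=O(1)$ (Frobenius norm), then every entry of $\mathrm{Var}(\hat\mu_n^L)$ is $O(|||\mathbf{D}|||_2/n)$, and hence $O(1/n)$ if also $|||\mathbf{D}|||_2=O(1)$.
   Context: Setup: there are $k$ treatment arms and $n$ units; $k$ is fixed while $n\to\infty$ along a sequence of finite populations, each with its own randomized design. All probabilities, expectations, variances, $O_p$ and $o_p$ refer only to the randomness of the treatment assignment. $\mathbf{R}_{ai}\in\{0,1\}$ indicates that unit $i$ is assigned to arm $a$ (exactly one arm per unit); $\mathbf{R}$ is the $kn\times kn$ diagonal matrix with diagonal $(\mathbf{R}_{11},\dots,\mathbf{R}_{1n},\mathbf{R}_{21},\dots,\mathbf{R}_{kn})$; $\pi=\mathrm{E}[\mathbf{R}]$ with diagonal entries in $(0,1)$; $1_{kn}$ is the all-ones vector; $\mathbf{D}=\mathrm{Var}(\pi^{-1}\mathbf{R}1_{kn})$; $|||\cdot|||_2$ is the spectral norm; $\mathrm{diag}(v)$ is the diagonal matrix with diagonal $v$. Moment-type estimator: fixed integers $l_1\ge1,l_2\ge0$; for each $n$, nonrandom $\phi^1,\dots,\phi^{l_1+l_2}\in\mathbb{R}^{kn}$ and a map $F=F_n:\mathbb{R}^{l_1+l_2}\to\mathbb{R}^k$ with (i) $\hat\mu_n=F(\hat m_n^1,\dots,\hat m_n^{l_1},m_n^{l_1+1},\dots,m_n^{l_1+l_2})$, $\hat m_n^s=\frac1n1_{kn}'\pi^{-1}\mathbf{R}\phi^s$,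 $m_n^s=\frac1n1_{kn}'\phi^s$; (ii) there exist $N,C,\epsilon>0$ such that for $n\ge N$ and $\sum_{s\le l_1}(\tilde m^s-m_n^s)^2<\epsilon$, $\|F(\tilde m^1,\dots,\tilde m^{l_1},m_n^{l_1+1},\dots)-F(m_n)\|_2\le C\sqrt{\sum_{s\le l_1}(\tilde m^s-m_n^s)^2}$; (iii) $\frac1n\|\phi^s\|_2^2\le C'$ for all $s,n$. *)

theory Defs
  imports "HOL-Probability.Probability" "HOL-Library.Landau_Symbols"
begin

text \<open>A randomized design on n units with k arms is a pmf over assignment
  functions w, where w i is the arm of unit i (i < n).  Vectors in R^{kn} are
  functions on pairs (a,i) with a < k, i < n.\<close>

definition Rind :: "(nat \<Rightarrow> nat) \<Rightarrow> nat \<Rightarrow> nat \<Rightarrow> real" where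
  "Rind w a i = (if w i = a then 1 else 0)"

definition piD :: "(nat \<Rightarrow> nat) pmf \<Rightarrow> nat \<Rightarrow> nat \<Rightarrow> real" where
  "piD P a i = measure_pmf.expectation P (\<lambda>w. Rind w a i)"

definition covar :: "'a pmf \<Rightarrow> ('a \<Rightarrow> real) \<Rightarrow> ('a \<Rightarrow> real) \<Rightarrow> real" where
  "covar P X Y = measure_pmf.expectation P
     (\<lambda>w. (X w - measure_pmf.expectation P X) * (Y w - measure_pmf.expectation P Y))"

definition idx :: "nat \<Rightarrow> nat \<Rightarrow> (nat \<times> nat) set" where
  "idx k n = {..<k} \<times> {..<n}"

definition mhat :: "(nat \<Rightarrow> nat) pmf \<Rightarrow> nat \<Rightarrow> nat \<Rightarrow> (nat \<Rightarrow> nat \<Rightarrow> real)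
    \<Rightarrow> (nat \<Rightarrow> nat) \<Rightarrow> real" where
  "mhat P k n phi w = (1 / real n) * (\<Sum>(a,i)\<in>idx k n. Rind w a i * phi a i / piD P a i)"

definition mpop :: "nat \<Rightarrow> nat \<Rightarrow> (nat \<Rightarrow> nat \<Rightarrow> real) \<Rightarrow> real" where
  "mpop k n phi = (1 / real n) * (\<Sum>(a,i)\<in>idx k n. phi a i)"

definition Dmat :: "(nat \<Rightarrow> nat) pmf \<Rightarrow> nat \<times> nat \<Rightarrow> nat \<times> nat \<Rightarrow> real" where
  "Dmat P r c = covar P (\<lambda>w. Rind w (fst r) (snd r) / piD P (fst r) (snd r))
                         (\<lambda>w. Rind w (fst c) (snd c) / piD P (fst c) (snd c))"

definition vnorm :: "'i set \<Rightarrow> ('i \<Rightarrow> real) \<Rightarrow> real" where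
  "vnorm I v = sqrt (\<Sum>r\<in>I. (v r)\<^sup>2)"

definition spec_norm :: "'i set \<Rightarrow> ('i \<Rightarrow> 'i \<Rightarrow> real) \<Rightarrow> real" where
  "spec_norm I M = Sup {vnorm I (\<lambda>r. \<Sum>c\<in>I. M r c * x c) | x. vnorm I x \<le> 1}"

text \<open>X_n = o_p(a_n) for nonnegative random quantities X_n
  (e.g. norms of random vectors) under the designs P n\<close>
definition little_op :: "(nat \<Rightarrow> 'a pmf) \<Rightarrow> (nat \<Rightarrow> 'a \<Rightarrow> real) \<Rightarrow> (nat \<Rightarrow> real) \<Rightarrow> bool" where
  "little_op P X a \<longleftrightarrow> (\<forall>\<epsilon>>0.
     (\<lambda>n. measure_pmf.prob (P n) {w. X n w > \<epsilon> * a n}) \<longlonglongrightarrow> 0)"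

text \<open>Argument vector (mt^1..mt^{l1}, mv^{l1+1}..mv^{l1+l2}) of F (0-indexed)\<close>
definition argv :: "nat \<Rightarrow> nat \<Rightarrow> (nat \<Rightarrow> real) \<Rightarrow> (nat \<Rightarrow> real) \<Rightarrow> nat \<Rightarrow> real" where
  "argv l1 l2 mt mv = (\<lambda>s. if s < l1 then mt s else if s < l1 + l2 then mv s else 0)"

end

theory Submission
  imports Defs
begin


definition bddf :: "('a \<Rightarrow> real) \<Rightarrow> bool" where
  "bddf f \<longleftrightarrow> (\<exists>B. \<forall>w. \<bar>f w\<bar> \<le> B)"

lemma bddf_int: "bddf f \<Longrightarrow> integrable (measure_pmf P) f"
proof -
  assume "bddf f"
  then obtain B where "\<forall>w. \<bar>f w\<bar> \<le> B" unfolding bddf_def by blast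
  then show ?thesis by (intro measure_pmf.integrable_const_bound[where B=B]) auto
qed

lemma bddf_const[simp]: "bddf (\<lambda>w. c)"
  unfolding bddf_def by auto

lemma bddf_add: assumes "bddf f" "bddf g" shows "bddf (\<lambda>w. f w + g w)"
proof -
  obtain B1 where a: "\<And>w. \<bar>f w\<bar> \<le> B1" using assms(1) unfolding bddf_def by blast
  obtain B2 where b: "\<And>w. \<bar>g w\<bar> \<le> B2" using assms(2) unfolding bddf_def by blast
  have "\<bar>f w + g w\<bar> \<le> B1 + B2" for w
    using a[of w] b[of w] abs_triangle_ineq[of "f w" "g w"] by linarith
  then show ?thesis unfolding bddf_def by blast
qed

lemma bddf_mult: assumes "bddf f" "bddf g" shows "bddf (\<lambda>w. f w * g w)"
proof -
  obtain B1 where a: "\<And>w. \<bar>f w\<bar> \<le> B1" using assms(1) unfolding bddf_def by blast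
  obtain B2 where b: "\<And>w. \<bar>g w\<bar> \<le> B2" using assms(2) unfolding bddf_def by blast
  have "\<bar>f w * g w\<bar> \<le> B1 * B2" for w
    unfolding abs_mult using a[of w] b[of w] by (intro mult_mono) auto
  then show ?thesis unfolding bddf_def by blast
qed

lemma bddf_diff: assumes "bddf f" "bddf g" shows "bddf (\<lambda>w. f w - g w)"
proof -
  obtain B1 where a: "\<And>w. \<bar>f w\<bar> \<le> B1" using assms(1) unfolding bddf_def by blast
  obtain B2 where b: "\<And>w. \<bar>g w\<bar> \<le> B2" using assms(2) unfolding bddf_def by blast
  have "\<bar>f w - g w\<bar> \<le> B1 + B2" for w
    using a[of w] b[of w] abs_triangle_ineq4[of "f w" "g w"] by linarith
  then show ?thesis unfolding bddf_def by blast
qed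

lemma bddf_sum: "(\<And>r. r \<in> I \<Longrightarrow> bddf (f r)) \<Longrightarrow> bddf (\<lambda>w. \<Sum>r\<in>I. f r w)"
proof (induction I rule: infinite_finite_induct)
  case (insert x F) then show ?case by (simp add: bddf_add)
qed simp_all

lemma covar_lin:
  fixes X :: "'i \<Rightarrow> 'a \<Rightarrow> real"
  assumes fin: "finite I" and bd: "\<And>r. bddf (X r)"
  shows "covar P (\<lambda>w. c + (\<Sum>r\<in>I. al r * X r w)) (\<lambda>w. d + (\<Sum>r\<in>I. be r * X r w))
       = (\<Sum>r\<in>I. \<Sum>q\<in>I. al r * be q * covar P (X r) (X q))"
proof -
  define E :: "('a \<Rightarrow> real) \<Rightarrow> real" where "E = (\<lambda>f. measure_pmf.expectation P f)"
  have int: "\<And>r. integrable (measure_pmf P) (X r)" using bd bddf_int by blast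
  have E1: "E (\<lambda>w. e + (\<Sum>r\<in>I. g r * X r w)) = e + (\<Sum>r\<in>I. g r * E (X r))" for e g
    unfolding E_def using int by (simp add: Bochner_Integration.integral_sum)
  have D1: "e + (\<Sum>r\<in>I. g r * X r w) - E (\<lambda>w. e + (\<Sum>r\<in>I. g r * X r w))
        = (\<Sum>r\<in>I. g r * (X r w - E (X r)))" for e g w
    unfolding E1 by (simp add: sum_subtractf right_diff_distrib)
  have eq: "(c + (\<Sum>r\<in>I. al r * X r w) - E (\<lambda>w. c + (\<Sum>r\<in>I. al r * X r w))) *
            (d + (\<Sum>r\<in>I. be r * X r w) - E (\<lambda>w. d + (\<Sum>r\<in>I. be r * X r w)))
     = (\<Sum>r\<in>I. \<Sum>q\<in>I. al r * be q * ((X r w - E (X r)) * (X q w - E (X q))))" for w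
    unfolding D1 sum_product by (intro sum.cong refl) (simp add: mult_ac)
  have bd2: "bddf (\<lambda>w. (X r w - E (X r)) * (X q w - E (X q)))" for r q
    by (intro bddf_mult bddf_diff bd bddf_const)
  have "covar P (\<lambda>w. c + (\<Sum>r\<in>I. al r * X r w)) (\<lambda>w. d + (\<Sum>r\<in>I. be r * X r w))
     = E (\<lambda>w. \<Sum>r\<in>I. \<Sum>q\<in>I. al r * be q * ((X r w - E (X r)) * (X q w - E (X q))))"
    unfolding covar_def E_def[symmetric] eq ..
  also have "\<dots> = (\<Sum>r\<in>I. \<Sum>q\<in>I. al r * be q * E (\<lambda>w. (X r w - E (X r)) * (X q w - E (X q))))"
  proof -
    define Y where "Y = (\<lambda>r q w. (X r w - E (X r)) * (X q w - E (X q)))"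
    have iY: "integrable (measure_pmf P) (Y r q)" for r q
      unfolding Y_def using bd2[THEN bddf_int] .
    have "E (\<lambda>w. \<Sum>r\<in>I. \<Sum>q\<in>I. al r * be q * Y r q w)
       = (\<Sum>r\<in>I. E (\<lambda>w. \<Sum>q\<in>I. al r * be q * Y r q w))"
      unfolding E_def by (rule Bochner_Integration.integral_sum) (auto intro!: iY)
    also have "\<dots> = (\<Sum>r\<in>I. \<Sum>q\<in>I. al r * be q * E (Y r q))"
      unfolding E_def by (intro sum.cong refl, subst Bochner_Integration.integral_sum) (auto intro!: iY)
    finally show ?thesis unfolding Y_def .
  qed
  also have "\<dots> = (\<Sum>r\<in>I. \<Sum>q\<in>I. al r * be q * covar P (X r) (X q))"
    unfolding covar_def E_def ..
  finally show ?thesis .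
qed



lemma vnorm_L2: "vnorm I v = L2_set v I"
  unfolding vnorm_def L2_set_def by simp

lemma sum_abs_mult_le: "\<bar>\<Sum>c\<in>I. f c * g c\<bar> \<le> L2_set f I * L2_set g I"
proof -
  have "\<bar>\<Sum>c\<in>I. f c * g c\<bar> \<le> (\<Sum>c\<in>I. \<bar>f c\<bar> * \<bar>g c\<bar>)"
    using sum_abs[of "\<lambda>c. f c * g c" I] by (simp add: abs_mult)
  also have "\<dots> \<le> L2_set f I * L2_set g I" by (rule L2_set_mult_ineq)
  finally show ?thesis .
qed

lemma spec_bnd:
  assumes "finite I" and x: "vnorm I x \<le> 1"
  shows "vnorm I (\<lambda>r. \<Sum>c\<in>I. M r c * x c) \<le> L2_set (\<lambda>r. L2_set (M r) I) I"
proof -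
  have x': "L2_set x I \<le> 1" using x by (simp add: vnorm_L2)
  have "L2_set (\<lambda>r. \<bar>\<Sum>c\<in>I. M r c * x c\<bar>) I \<le> L2_set (\<lambda>r. L2_set (M r) I) I"
  proof (rule L2_set_mono)
    fix r assume "r \<in> I"
    have "\<bar>\<Sum>c\<in>I. M r c * x c\<bar> \<le> L2_set (M r) I * L2_set x I" by (rule sum_abs_mult_le)
    also have "\<dots> \<le> L2_set (M r) I" using x'
      by (simp add: mult_left_le)
    finally show "\<bar>\<Sum>c\<in>I. M r c * x c\<bar> \<le> L2_set (M r) I" .
  qed simp
  then show ?thesis
    unfolding vnorm_L2 by (simp add: L2_set_def power2_abs)
qed

lemma spec_bdd:
  assumes "finite I"
  shows "bdd_above {vnorm I (\<lambda>r. \<Sum>c\<in>I. M r c * x c) | x. vnorm I x \<le> 1}"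
  unfolding bdd_above_def using spec_bnd[OF assms] by blast

lemma spec_nonneg: "finite I \<Longrightarrow> 0 \<le> spec_norm I M"
proof -
  assume fin: "finite I"
  have mem: "vnorm I (\<lambda>r. \<Sum>c\<in>I. M r c * (\<lambda>_. 0::real) c) \<in> {vnorm I (\<lambda>r. \<Sum>c\<in>I. M r c * x c) | x. vnorm I x \<le> 1}"
    by (rule CollectI, rule exI[of _ "\<lambda>_. 0"]) (simp add: vnorm_def)
  have "vnorm I (\<lambda>r. \<Sum>c\<in>I. M r c * (\<lambda>_. 0::real) c) \<le> spec_norm I M"
    unfolding spec_norm_def by (rule cSup_upper[OF mem spec_bdd[OF fin]])
  moreover have "vnorm I (\<lambda>r. \<Sum>c\<in>I. M r c * (\<lambda>_. 0::real) c) = 0" by (simp add: vnorm_def)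
  ultimately show ?thesis by simp
qed

lemma spec_apply:
  assumes fin: "finite I"
  shows "vnorm I (\<lambda>r. \<Sum>c\<in>I. M r c * y c) \<le> spec_norm I M * vnorm I y"
proof (cases "vnorm I y = 0")
  case True
  then have "\<forall>c\<in>I. y c = 0" using fin by (simp add: vnorm_L2 L2_set_eq_0_iff)
  then show ?thesis by (simp add: vnorm_def)
next
  case False
  define t where "t = vnorm I y"
  have tpos: "t > 0" using False L2_set_nonneg[of y I] unfolding t_def vnorm_L2 by linarith
  define x where "x = (\<lambda>c. y c / t)"
  have "vnorm I x = vnorm I (\<lambda>c. (1/t) * y c)" unfolding x_def by simp
  also have "\<dots> = (1/t) * vnorm I y" unfolding vnorm_L2
    using tpos by (subst L2_set_right_distrib) auto
  finally have "vnorm I x = (1/t) * vnorm I y" .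
  then have x1: "vnorm I x \<le> 1" using tpos unfolding t_def by simp
  have A: "vnorm I (\<lambda>r. \<Sum>c\<in>I. M r c * x c) \<le> spec_norm I M"
    unfolding spec_norm_def by (rule cSup_upper[OF _ spec_bdd[OF fin]]) (use x1 in blast)
  have B: "vnorm I (\<lambda>r. \<Sum>c\<in>I. M r c * x c) = (1/t) * vnorm I (\<lambda>r. \<Sum>c\<in>I. M r c * y c)"
  proof -
    have "(\<lambda>r. \<Sum>c\<in>I. M r c * x c) = (\<lambda>r. (1/t) * (\<Sum>c\<in>I. M r c * y c))"
      unfolding x_def by (simp add: sum_distrib_left mult_ac)
    then show ?thesis unfolding vnorm_L2 using tpos
      L2_set_right_distrib[of "1/t" "\<lambda>r. \<Sum>c\<in>I. M r c * y c" I] by simp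
  qed
  have "vnorm I (\<lambda>r. \<Sum>c\<in>I. M r c * y c) = t * vnorm I (\<lambda>r. \<Sum>c\<in>I. M r c * x c)"
    using B tpos by simp
  also have "\<dots> \<le> t * spec_norm I M" using A tpos by (intro mult_left_mono) auto
  finally show ?thesis unfolding t_def by (simp add: mult.commute)
qed

lemma quad_bound:
  assumes fin: "finite I"
  shows "\<bar>\<Sum>r\<in>I. \<Sum>c\<in>I. x r * M r c * y c\<bar> \<le> spec_norm I M * vnorm I x * vnorm I y"
proof -
  have "(\<Sum>r\<in>I. \<Sum>c\<in>I. x r * M r c * y c) = (\<Sum>r\<in>I. x r * (\<Sum>c\<in>I. M r c * y c))"
    by (simp add: sum_distrib_left mult.assoc)
  also have "\<bar>\<dots>\<bar> \<le> vnorm I x * vnorm I (\<lambda>r. \<Sum>c\<in>I. M r c * y c)"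
    unfolding vnorm_L2 by (rule sum_abs_mult_le)
  also have "\<dots> \<le> vnorm I x * (spec_norm I M * vnorm I y)"
    by (intro mult_left_mono spec_apply fin) (simp add: vnorm_def sum_nonneg)
  finally show ?thesis by (simp add: mult_ac)
qed



definition Xf :: "(nat \<Rightarrow> nat) pmf \<Rightarrow> nat \<times> nat \<Rightarrow> (nat \<Rightarrow> nat) \<Rightarrow> real" where
  "Xf Q r w = Rind w (fst r) (snd r) / piD Q (fst r) (snd r)"

lemma bddf_Xf: "bddf (Xf Q r)"
proof -
  have "\<bar>Xf Q r w\<bar> \<le> 1 / \<bar>piD Q (fst r) (snd r)\<bar>" for w
    unfolding Xf_def Rind_def by (simp add: divide_le_cancel)
  then show ?thesis unfolding bddf_def by blast
qed

lemma fin_idx[simp]: "finite (idx k n)"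
  unfolding idx_def by simp

lemma mhat_lin: "mhat Q k n phi = (\<lambda>w. 0 + (\<Sum>r\<in>idx k n. (phi (fst r) (snd r) / real n) * Xf Q r w))"
  unfolding mhat_def Xf_def split_def sum_distrib_left
  by (intro ext) (simp add: divide_inverse mult_ac)

lemma bddf_mhat: "bddf (mhat Q k n phi)"
  unfolding mhat_lin by (intro bddf_add bddf_const bddf_sum bddf_mult bddf_Xf)

lemma E_Xf: "piD Q (fst r) (snd r) > 0 \<Longrightarrow> measure_pmf.expectation Q (Xf Q r) = 1"
  unfolding Xf_def by (simp add: piD_def[symmetric])

lemma E_mhat:
  assumes pos: "\<And>a i. a < k \<Longrightarrow> i < n \<Longrightarrow> 0 < piD Q a i"
  shows "measure_pmf.expectation Q (mhat Q k n phi) = mpop k n phi"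
proof -
  have int: "integrable (measure_pmf Q) (Xf Q r)" for r using bddf_Xf bddf_int by blast
  have "measure_pmf.expectation Q (mhat Q k n phi)
     = (\<Sum>r\<in>idx k n. (phi (fst r) (snd r) / real n) * measure_pmf.expectation Q (Xf Q r))"
    unfolding mhat_lin using int by (simp add: Bochner_Integration.integral_sum)
  also have "\<dots> = (\<Sum>r\<in>idx k n. (phi (fst r) (snd r) / real n))"
    by (intro sum.cong refl) (auto simp: E_Xf pos idx_def)
  also have "\<dots> = mpop k n phi"
    unfolding mpop_def split_def by (simp add: sum_distrib_left divide_inverse mult_ac)
  finally show ?thesis .
qed

lemma Dmat_Xf: "Dmat Q r c = covar Q (Xf Q r) (Xf Q c)"
  unfolding Dmat_def Xf_def by (rule refl)

lemma var_mhat: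
  "covar Q (mhat Q k n phi) (mhat Q k n phi)
   = (\<Sum>r\<in>idx k n. \<Sum>c\<in>idx k n. (phi (fst r) (snd r) / real n) * Dmat Q r c * (phi (fst c) (snd c) / real n))"
  unfolding mhat_lin
  by (subst covar_lin[OF fin_idx bddf_Xf]) (simp add: Dmat_Xf mult_ac)

lemma Esq_mhat:
  assumes pos: "\<And>a i. a < k \<Longrightarrow> i < n \<Longrightarrow> 0 < piD Q a i"
  shows "measure_pmf.expectation Q (\<lambda>w. (mhat Q k n phi w - mpop k n phi)\<^sup>2)
       = covar Q (mhat Q k n phi) (mhat Q k n phi)"
  unfolding covar_def using E_mhat[OF pos] by (simp add: power2_eq_square)

lemma Esq_bound:
  assumes pos: "\<And>a i. a < k \<Longrightarrow> i < n \<Longrightarrow> 0 < piD Q a i"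
    and bnd: "(1 / real n) * (\<Sum>(a,i)\<in>idx k n. (phi a i)\<^sup>2) \<le> C'"
  shows "measure_pmf.expectation Q (\<lambda>w. (mhat Q k n phi w - mpop k n phi)\<^sup>2)
       \<le> spec_norm (idx k n) (Dmat Q) / real n * C'"
proof -
  define v where "v = (\<lambda>r. phi (fst r) (snd r) / real n)"
  have sn: "0 \<le> spec_norm (idx k n) (Dmat Q)" by (rule spec_nonneg) simp
  have "measure_pmf.expectation Q (\<lambda>w. (mhat Q k n phi w - mpop k n phi)\<^sup>2)
      = (\<Sum>r\<in>idx k n. \<Sum>c\<in>idx k n. v r * Dmat Q r c * v c)"
    using Esq_mhat[OF pos] var_mhat[of Q k n phi] unfolding v_def by simp
  also have "\<dots> \<le> \<bar>\<dots>\<bar>" by simp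
  also have "\<dots> \<le> spec_norm (idx k n) (Dmat Q) * (vnorm (idx k n) v * vnorm (idx k n) v)"
    using quad_bound[OF fin_idx, of v "Dmat Q" v k n] by (simp add: mult.assoc)
  also have "vnorm (idx k n) v * vnorm (idx k n) v = (\<Sum>r\<in>idx k n. (v r)\<^sup>2)"
    unfolding vnorm_def by (simp add: sum_nonneg)
  also have "(\<Sum>r\<in>idx k n. (v r)\<^sup>2) = (1 / real n) * ((1 / real n) * (\<Sum>(a,i)\<in>idx k n. (phi a i)\<^sup>2))"
    unfolding v_def split_def by (simp add: sum_distrib_left power_divide power2_eq_square)
  also have "spec_norm (idx k n) (Dmat Q) * ((1 / real n) * ((1 / real n) * (\<Sum>(a,i)\<in>idx k n. (phi a i)\<^sup>2)))
     = spec_norm (idx k n) (Dmat Q) / real n * ((1 / real n) * (\<Sum>(a,i)\<in>idx k n. (phi a i)\<^sup>2))"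
    by simp
  also have "\<dots> \<le> spec_norm (idx k n) (Dmat Q) / real n * C'"
    using sn bnd by (intro mult_left_mono) auto
  finally show ?thesis .
qed



lemma bddf_sq: "bddf f \<Longrightarrow> bddf (\<lambda>w. (f w)\<^sup>2)"
  unfolding power2_eq_square by (rule bddf_mult)

lemma key_prob:
  fixes Q :: "'a pmf" and S Z :: "'a \<Rightarrow> real"
  assumes bS: "bddf S" and Snn: "\<And>w. 0 \<le> S w"
    and ES: "measure_pmf.expectation Q S \<le> K * a"
    and K: "0 \<le> K" and a: "0 \<le> a" and eps: "0 < \<epsilon>" and C: "0 < C" and del: "0 < \<delta>"
    and ZS: "\<And>w. S w < \<epsilon> \<Longrightarrow> Z w \<le> C * S w"
  shows "measure_pmf.prob Q {w. Z w > \<delta> * sqrt a} \<le> K * a / \<epsilon> + K * C * sqrt a / \<delta>"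
proof -
  have iS: "integrable (measure_pmf Q) S" using bS by (rule bddf_int)
  have sub: "{w. Z w > \<delta> * sqrt a} \<subseteq> {w. \<epsilon> \<le> S w} \<union> {w. C * S w > \<delta> * sqrt a}"
  proof
    fix w assume "w \<in> {w. Z w > \<delta> * sqrt a}"
    then have "Z w > \<delta> * sqrt a" by simp
    then show "w \<in> {w. \<epsilon> \<le> S w} \<union> {w. C * S w > \<delta> * sqrt a}"
      using ZS[of w] by force
  qed
  have "measure_pmf.prob Q {w. Z w > \<delta> * sqrt a}
      \<le> measure_pmf.prob Q ({w. \<epsilon> \<le> S w} \<union> {w. C * S w > \<delta> * sqrt a})"
    using sub by (intro measure_pmf.finite_measure_mono) auto
  also have "\<dots> \<le> measure_pmf.prob Q {w. \<epsilon> \<le> S w} + measure_pmf.prob Q {w. C * S w > \<delta> * sqrt a}"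
    by (rule measure_Un_le) auto
  also have "measure_pmf.prob Q {w. \<epsilon> \<le> S w} \<le> K * a / \<epsilon>"
  proof -
    have "measure_pmf.prob Q {w. \<epsilon> \<le> S w} \<le> measure_pmf.expectation Q S / \<epsilon>"
      using integral_Markov_inequality_measure[OF iS, of UNIV \<epsilon>] eps Snn by simp
    also have "\<dots> \<le> K * a / \<epsilon>" using ES eps by (intro divide_right_mono) auto
    finally show ?thesis .
  qed
  also have "measure_pmf.prob Q {w. C * S w > \<delta> * sqrt a} \<le> K * C * sqrt a / \<delta>"
  proof (cases "a = 0")
    case True
    have "measure_pmf.expectation Q S \<le> 0" using ES True by simp
    moreover have "0 \<le> measure_pmf.expectation Q S" using Snn by simp
    ultimately have "measure_pmf.expectation Q S = 0" by simp
    then have "AE w in measure_pmf Q. S w = 0"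
      using integral_nonneg_eq_0_iff_AE[OF iS] Snn by simp
    then have "\<forall>w\<in>set_pmf Q. S w = 0" by (simp add: AE_measure_pmf_iff)
    then have "measure_pmf.prob Q {w. C * S w > \<delta> * sqrt a} = 0"
      unfolding measure_pmf_zero_iff using True by auto
    then show ?thesis using True by simp
  next
    case False
    then have ap: "0 < a" using a by simp
    have sp: "0 < sqrt a" using ap by simp
    define t where "t = \<delta> * sqrt a / C"
    have tp: "0 < t" unfolding t_def using del sp C by simp
    have "{w. C * S w > \<delta> * sqrt a} \<subseteq> {w. t \<le> S w}"
      unfolding t_def using C by (auto simp: field_simps)
    then have "measure_pmf.prob Q {w. C * S w > \<delta> * sqrt a} \<le> measure_pmf.prob Q {w. t \<le> S w}"
      by (intro measure_pmf.finite_measure_mono) auto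
    also have "\<dots> \<le> measure_pmf.expectation Q S / t"
      using integral_Markov_inequality_measure[OF iS, of UNIV t] tp Snn by simp
    also have "\<dots> \<le> K * a / t" using ES tp by (intro divide_right_mono) auto
    also have "K * a / t = K * C * sqrt a / \<delta>"
    proof -
      have "a = sqrt a * sqrt a" using a by simp
      then show ?thesis unfolding t_def using sp C del by (simp add: field_simps)
    qed
    finally show ?thesis .
  qed
  finally show ?thesis by simp
qed

lemma lin_comb:
  fixes d m :: "nat \<Rightarrow> real" and p :: "nat \<Rightarrow> 'i \<Rightarrow> real" and x :: "'i \<Rightarrow> real"
  shows "(\<Sum>s<l. d s * ((0 + (\<Sum>r\<in>I. p s r / n * x r)) - m s))
     = - (\<Sum>s<l. d s * m s) + (\<Sum>r\<in>I. ((\<Sum>s<l. d s * p s r) / n) * x r)"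
proof -
  have "(\<Sum>s<l. d s * ((0 + (\<Sum>r\<in>I. p s r / n * x r)) - m s))
      = (\<Sum>s<l. \<Sum>r\<in>I. d s * (p s r / n * x r)) - (\<Sum>s<l. d s * m s)"
    by (simp add: right_diff_distrib sum_subtractf sum_distrib_left)
  also have "(\<Sum>s<l. \<Sum>r\<in>I. d s * (p s r / n * x r)) = (\<Sum>r\<in>I. \<Sum>s<l. d s * (p s r / n * x r))"
    by (rule sum.swap)
  also have "\<dots> = (\<Sum>r\<in>I. ((\<Sum>s<l. d s * p s r) / n) * x r)"
    by (intro sum.cong refl) (simp add: sum_distrib_right sum_distrib_left sum_divide_distrib mult_ac)
  finally show ?thesis by simp
qed



theorem mainTheorem2:
  fixes k l1 l2 :: nat
    and P :: "nat \<Rightarrow> (nat \<Rightarrow> nat) pmf"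
    and phi :: "nat \<Rightarrow> nat \<Rightarrow> nat \<Rightarrow> nat \<Rightarrow> real"
    and F :: "nat \<Rightarrow> (nat \<Rightarrow> real) \<Rightarrow> nat \<Rightarrow> real"
    and dF :: "nat \<Rightarrow> nat \<Rightarrow> nat \<Rightarrow> real"
  defines "mv \<equiv> \<lambda>n s. mpop k n (phi n s)"
  defines "mhv \<equiv> \<lambda>n s w. mhat (P n) k n (phi n s) w"
  defines "muhat \<equiv> \<lambda>n w. F n (argv l1 l2 (\<lambda>s. mhv n s w) (mv n))"
  defines "muL \<equiv> \<lambda>n w a. F n (argv l1 l2 (mv n) (mv n)) a
                          + (\<Sum>s<l1. dF n a s * (mhv n s w - mv n s))"
  defines "D \<equiv> \<lambda>n. Dmat (P n)"
  defines "z \<equiv> \<lambda>n (r::nat \<times> nat) a. \<Sum>s<l1. dF n a s * phi n s (fst r) (snd r)"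
  assumes l1_pos: "l1 \<ge> 1"
    and design: "\<And>n w i. w \<in> set_pmf (P n) \<Longrightarrow> i < n \<Longrightarrow> w i < k"
    and pi_bounds: "\<And>n a i. a < k \<Longrightarrow> i < n \<Longrightarrow> 0 < piD (P n) a i \<and> piD (P n) a i < 1"
    and F_lip: "\<exists>N C \<epsilon>. C > 0 \<and> \<epsilon> > 0 \<and> (\<forall>n\<ge>N. \<forall>mt.
        (\<Sum>s<l1. (mt s - mv n s)\<^sup>2) < \<epsilon> \<longrightarrow>
        vnorm {..<k} (\<lambda>a. F n (argv l1 l2 mt (mv n)) a - F n (argv l1 l2 (mv n) (mv n)) a)
          \<le> C * sqrt (\<Sum>s<l1. (mt s - mv n s)\<^sup>2))"
    and phi_bound: "\<exists>C'. \<forall>n s. s < l1 + l2 \<longrightarrow>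
        (1 / real n) * (\<Sum>(a,i)\<in>idx k n. (phi n s a i)\<^sup>2) \<le> C'"
    and F_lin: "\<exists>N C \<epsilon>. C > 0 \<and> \<epsilon> > 0 \<and> (\<forall>n\<ge>N. \<forall>mt.
        (\<Sum>s<l1. (mt s - mv n s)\<^sup>2) < \<epsilon> \<longrightarrow>
        vnorm {..<k} (\<lambda>a. F n (argv l1 l2 mt (mv n)) a - F n (argv l1 l2 (mv n) (mv n)) a
                           - (\<Sum>s<l1. dF n a s * (mt s - mv n s)))
          \<le> C * (\<Sum>s<l1. (mt s - mv n s)\<^sup>2))"
  shows
    "((\<lambda>n. spec_norm (idx k n) (D n) / real n) \<longlonglongrightarrow> 0 \<longrightarrow>
        little_op P (\<lambda>n w. vnorm {..<k} (\<lambda>a. muhat n w a - muL n w a))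
                     (\<lambda>n. sqrt (spec_norm (idx k n) (D n) / real n))
      \<and> little_op P (\<lambda>n w. vnorm {..<k} (\<lambda>a. muhat n w a - muL n w a)) (\<lambda>n. 1))
   \<and> (\<forall>n a b. a < k \<longrightarrow> b < k \<longrightarrow>
        covar (P n) (\<lambda>w. muL n w a) (\<lambda>w. muL n w b)
        = (1 / (real n)\<^sup>2) * (\<Sum>r\<in>idx k n. \<Sum>c\<in>idx k n. z n r a * D n r c * z n c b))
   \<and> ((\<lambda>n. (1 / real n) * (\<Sum>r\<in>idx k n. \<Sum>a<k. (z n r a)\<^sup>2)) \<in> O(\<lambda>n. 1) \<longrightarrow>
        (\<forall>a<k. \<forall>b<k. (\<lambda>n. covar (P n) (\<lambda>w. muL n w a) (\<lambda>w. muL n w b))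
             \<in> O(\<lambda>n. spec_norm (idx k n) (D n) / real n))
      \<and> ((\<lambda>n. spec_norm (idx k n) (D n)) \<in> O(\<lambda>n. 1) \<longrightarrow>
        (\<forall>a<k. \<forall>b<k. (\<lambda>n. covar (P n) (\<lambda>w. muL n w a) (\<lambda>w. muL n w b))
             \<in> O(\<lambda>n. 1 / real n))))"
proof -
  define sp where "sp = (\<lambda>n. spec_norm (idx k n) (D n))"
  have sp_nn: "0 \<le> sp n" for n unfolding sp_def by (rule spec_nonneg) simp
  have pos: "\<And>n a i. a < k \<Longrightarrow> i < n \<Longrightarrow> 0 < piD (P n) a i" using pi_bounds by blast
  have mhv_lin: "mhv n s w = 0 + (\<Sum>r\<in>idx k n. phi n s (fst r) (snd r) / real n * Xf (P n) r w)" for n s w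
    unfolding mhv_def mhat_lin by simp
  define cst where "cst = (\<lambda>n a. F n (argv l1 l2 (mv n) (mv n)) a - (\<Sum>s<l1. dF n a s * mv n s))"
  have muL_eq: "(\<lambda>w. muL n w a) = (\<lambda>w. cst n a + (\<Sum>r\<in>idx k n. (z n r a / real n) * Xf (P n) r w))" for n a
  proof
    fix w
    have "muL n w a = F n (argv l1 l2 (mv n) (mv n)) a
       + (\<Sum>s<l1. dF n a s * ((0 + (\<Sum>r\<in>idx k n. phi n s (fst r) (snd r) / real n * Xf (P n) r w)) - mv n s))"
      unfolding muL_def mhv_lin ..
    also have "\<dots> = cst n a + (\<Sum>r\<in>idx k n. (z n r a / real n) * Xf (P n) r w)"
      unfolding lin_comb cst_def z_def by simp
    finally show "muL n w a = cst n a + (\<Sum>r\<in>idx k n. (z n r a / real n) * Xf (P n) r w)" .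
  qed
  have cov: "covar (P n) (\<lambda>w. muL n w a) (\<lambda>w. muL n w b)
        = (1 / (real n)\<^sup>2) * (\<Sum>r\<in>idx k n. \<Sum>c\<in>idx k n. z n r a * D n r c * z n c b)" for n a b
  proof -
    have "covar (P n) (\<lambda>w. muL n w a) (\<lambda>w. muL n w b)
       = (\<Sum>r\<in>idx k n. \<Sum>c\<in>idx k n. (z n r a / real n) * (z n c b / real n) * covar (P n) (Xf (P n) r) (Xf (P n) c))"
      unfolding muL_eq by (rule covar_lin[OF fin_idx bddf_Xf])
    also have "\<dots> = (1 / (real n)\<^sup>2) * (\<Sum>r\<in>idx k n. \<Sum>c\<in>idx k n. z n r a * D n r c * z n c b)"
      unfolding sum_distrib_left D_def Dmat_Xf
      by (intro sum.cong refl) (simp add: divide_inverse power2_eq_square inverse_mult_distrib mult_ac)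
    finally show ?thesis .
  qed
  define S where "S = (\<lambda>n. \<Sum>r\<in>idx k n. \<Sum>a<k. (z n r a)\<^sup>2)"
  have S_nn: "0 \<le> S n" for n unfolding S_def by (intro sum_nonneg) auto
  have covbnd: "\<bar>covar (P n) (\<lambda>w. muL n w a) (\<lambda>w. muL n w b)\<bar> \<le> sp n / real n * ((1 / real n) * S n)"
    if ab: "a < k" "b < k" for n a b
  proof -
    have vz: "vnorm (idx k n) (\<lambda>r. z n r c) \<le> sqrt (S n)" if "c < k" for c
      unfolding vnorm_def S_def
    proof (rule real_sqrt_le_mono, rule sum_mono)
      fix r show "(z n r c)\<^sup>2 \<le> (\<Sum>a<k. (z n r a)\<^sup>2)"
        using that by (intro member_le_sum[where f="\<lambda>a. (z n r a)\<^sup>2"]) auto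
    qed
    have vnn: "0 \<le> vnorm (idx k n) (\<lambda>r. z n r c)" for c by (simp add: vnorm_def sum_nonneg)
    have "\<bar>covar (P n) (\<lambda>w. muL n w a) (\<lambda>w. muL n w b)\<bar>
        = (1 / (real n)\<^sup>2) * \<bar>\<Sum>r\<in>idx k n. \<Sum>c\<in>idx k n. z n r a * D n r c * z n c b\<bar>"
      unfolding cov by (simp add: abs_mult)
    also have "\<dots> \<le> (1 / (real n)\<^sup>2) * (sp n * vnorm (idx k n) (\<lambda>r. z n r a) * vnorm (idx k n) (\<lambda>r. z n r b))"
      unfolding sp_def by (intro mult_left_mono quad_bound fin_idx) auto
    also have "\<dots> \<le> (1 / (real n)\<^sup>2) * (sp n * sqrt (S n) * sqrt (S n))"
      using vz[OF ab(1)] vz[OF ab(2)] sp_nn[of n] vnn S_nn[of n]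
      by (intro mult_left_mono mult_mono) (auto intro: mult_nonneg_nonneg)
    also have "\<dots> = sp n / real n * ((1 / real n) * S n)"
      using S_nn[of n] by (simp add: power2_eq_square)
    finally show ?thesis .
  qed
  have part3: "((\<lambda>n. (1 / real n) * S n) \<in> O(\<lambda>n. 1) \<longrightarrow>
        (\<forall>a<k. \<forall>b<k. (\<lambda>n. covar (P n) (\<lambda>w. muL n w a) (\<lambda>w. muL n w b))
             \<in> O(\<lambda>n. sp n / real n))
      \<and> ((\<lambda>n. sp n) \<in> O(\<lambda>n. 1) \<longrightarrow>
        (\<forall>a<k. \<forall>b<k. (\<lambda>n. covar (P n) (\<lambda>w. muL n w a) (\<lambda>w. muL n w b))
             \<in> O(\<lambda>n. 1 / real n))))"
  proof (intro impI conjI allI)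
    assume "(\<lambda>n. (1 / real n) * S n) \<in> O(\<lambda>n. 1)"
    then obtain c where c: "c > 0" "eventually (\<lambda>n. norm ((1 / real n) * S n) \<le> c * norm (1::real)) at_top"
      by (elim landau_o.bigE)
    have ev: "eventually (\<lambda>n. (1 / real n) * S n \<le> c) at_top"
      using c(2) by eventually_elim (simp add: abs_of_nonneg S_nn)
    have cb: "\<bar>covar (P n) (\<lambda>w. muL n w a) (\<lambda>w. muL n w b)\<bar> \<le> c * (sp n / real n)"
      if "(1 / real n) * S n \<le> c" "a < k" "b < k" for n a b
    proof -
      have "\<bar>covar (P n) (\<lambda>w. muL n w a) (\<lambda>w. muL n w b)\<bar> \<le> sp n / real n * ((1 / real n) * S n)"
        using covbnd that by blast
      also have "\<dots> \<le> sp n / real n * c"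
        using that sp_nn[of n] by (intro mult_left_mono) auto
      finally show ?thesis by (simp add: mult.commute)
    qed
    show "(\<lambda>n. covar (P n) (\<lambda>w. muL n w a) (\<lambda>w. muL n w b)) \<in> O(\<lambda>n. sp n / real n)"
      if "a < k" "b < k" for a b
    proof (rule bigoI[where c=c])
      show "eventually (\<lambda>n. norm (covar (P n) (\<lambda>w. muL n w a) (\<lambda>w. muL n w b)) \<le> c * norm (sp n / real n)) at_top"
        using ev
      proof eventually_elim
        case (elim n)
        then show ?case using cb[OF elim that] sp_nn[of n] by simp
      qed
    qed
    assume "(\<lambda>n. sp n) \<in> O(\<lambda>n. 1)"
    then obtain c2 where c2: "c2 > 0" "eventually (\<lambda>n. norm (sp n) \<le> c2 * norm (1::real)) at_top"
      by (elim landau_o.bigE)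
    show "(\<lambda>n. covar (P n) (\<lambda>w. muL n w a) (\<lambda>w. muL n w b)) \<in> O(\<lambda>n. 1 / real n)"
      if "a < k" "b < k" for a b
    proof (rule bigoI[where c="c * c2"])
      show "eventually (\<lambda>n. norm (covar (P n) (\<lambda>w. muL n w a) (\<lambda>w. muL n w b)) \<le> (c * c2) * norm (1 / real n)) at_top"
        using ev c2(2)
      proof eventually_elim
        case (elim n)
        have "\<bar>covar (P n) (\<lambda>w. muL n w a) (\<lambda>w. muL n w b)\<bar> \<le> c * (sp n / real n)"
          using cb[OF elim(1) that] .
        also have "\<dots> \<le> c * (c2 / real n)"
          using elim(2) c(1) sp_nn[of n] by (intro mult_left_mono divide_right_mono) auto
        finally show ?case by simp
      qed
    qed
  qed
  have part1: "(\<lambda>n. sp n / real n) \<longlonglongrightarrow> 0 \<longrightarrow>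
        little_op P (\<lambda>n w. vnorm {..<k} (\<lambda>a. muhat n w a - muL n w a)) (\<lambda>n. sqrt (sp n / real n))
      \<and> little_op P (\<lambda>n w. vnorm {..<k} (\<lambda>a. muhat n w a - muL n w a)) (\<lambda>n. 1)"
  proof (intro impI)
    assume lim: "(\<lambda>n. sp n / real n) \<longlonglongrightarrow> 0"
    obtain N C \<epsilon> where C: "C > 0" and eps: "\<epsilon> > 0" and FL: "\<And>n mt. n \<ge> N \<Longrightarrow>
        (\<Sum>s<l1. (mt s - mv n s)\<^sup>2) < \<epsilon> \<Longrightarrow>
        vnorm {..<k} (\<lambda>a. F n (argv l1 l2 mt (mv n)) a - F n (argv l1 l2 (mv n) (mv n)) a
                           - (\<Sum>s<l1. dF n a s * (mt s - mv n s)))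
          \<le> C * (\<Sum>s<l1. (mt s - mv n s)\<^sup>2)"
      using F_lin by blast
    obtain C' where C': "\<And>n s. s < l1 + l2 \<Longrightarrow> (1 / real n) * (\<Sum>(a,i)\<in>idx k n. (phi n s a i)\<^sup>2) \<le> C'"
      using phi_bound by blast
    have C'nn: "0 \<le> C'" using C'[of 0 0] l1_pos by (simp add: idx_def)
    define A where "A = (\<lambda>n. sp n / real n)"
    have A_nn: "0 \<le> A n" for n unfolding A_def using sp_nn[of n] by simp
    define SS where "SS = (\<lambda>n w. \<Sum>s<l1. (mhv n s w - mv n s)\<^sup>2)"
    define Z where "Z = (\<lambda>n w. vnorm {..<k} (\<lambda>a. muhat n w a - muL n w a))"
    have bS: "bddf (SS n)" for n
      unfolding SS_def mhv_def mv_def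
      by (intro bddf_sum bddf_sq bddf_diff bddf_mhat bddf_const)
    have SSnn: "0 \<le> SS n w" for n w unfolding SS_def by (intro sum_nonneg) auto
    define K where "K = real l1 * C'"
    have Knn: "0 \<le> K" unfolding K_def using C'nn by simp
    have ESS: "measure_pmf.expectation (P n) (SS n) \<le> K * A n" for n
    proof -
      have "measure_pmf.expectation (P n) (SS n)
          = (\<Sum>s<l1. measure_pmf.expectation (P n) (\<lambda>w. (mhv n s w - mv n s)\<^sup>2))"
        unfolding SS_def
        by (rule Bochner_Integration.integral_sum)
           (unfold mhv_def mv_def, intro bddf_int bddf_sq bddf_diff bddf_mhat bddf_const)
      also have "\<dots> \<le> (\<Sum>s<l1. A n * C')"
      proof (rule sum_mono)
        fix s assume "s \<in> {..<l1}"
        then have "s < l1 + l2" by simp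
        then show "measure_pmf.expectation (P n) (\<lambda>w. (mhv n s w - mv n s)\<^sup>2) \<le> A n * C'"
          unfolding mhv_def mv_def A_def sp_def D_def
          using Esq_bound[OF pos C'] by blast
      qed
      also have "\<dots> = real l1 * (A n * C')" by simp
      finally show ?thesis unfolding K_def by (simp add: mult_ac)
    qed
    have ZS: "Z n w \<le> C * SS n w" if "n \<ge> N" "SS n w < \<epsilon>" for n w
    proof -
      have "Z n w = vnorm {..<k} (\<lambda>a. F n (argv l1 l2 (\<lambda>s. mhv n s w) (mv n)) a - F n (argv l1 l2 (mv n) (mv n)) a
                           - (\<Sum>s<l1. dF n a s * ((\<lambda>s. mhv n s w) s - mv n s)))"
        unfolding Z_def muhat_def muL_def by (simp add: diff_diff_eq)
      also have "\<dots> \<le> C * (\<Sum>s<l1. ((\<lambda>s. mhv n s w) s - mv n s)\<^sup>2)"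
        by (rule FL[OF that(1)]) (use that(2) in \<open>simp add: SS_def\<close>)
      finally show ?thesis unfolding SS_def by simp
    qed
    have bnd: "measure_pmf.prob (P n) {w. Z n w > \<delta> * sqrt (A n)}
        \<le> K * A n / \<epsilon> + K * C * sqrt (A n) / \<delta>" if "n \<ge> N" "\<delta> > 0" for n \<delta>
      by (rule key_prob[OF bS SSnn ESS Knn A_nn eps C that(2) ZS[OF that(1)]])
    have Al: "A \<longlonglongrightarrow> 0" using lim unfolding A_def .
    have sAl: "(\<lambda>n. sqrt (A n)) \<longlonglongrightarrow> 0" using tendsto_real_sqrt[OF Al] by simp
    have ub: "(\<lambda>n. K * A n / \<epsilon> + K * C * sqrt (A n) / \<delta>) \<longlonglongrightarrow> 0" for \<delta>
      by (intro tendsto_add_zero tendsto_divide_zero tendsto_mult_right_zero Al sAl)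
    have L1: "(\<lambda>n. measure_pmf.prob (P n) {w. Z n w > \<delta> * sqrt (A n)}) \<longlonglongrightarrow> 0" if "\<delta> > 0" for \<delta>
    proof (rule tendsto_sandwich[OF _ _ tendsto_const ub[of \<delta>]])
      show "\<forall>\<^sub>F n in sequentially. 0 \<le> measure_pmf.prob (P n) {w. Z n w > \<delta> * sqrt (A n)}" by simp
      show "\<forall>\<^sub>F n in sequentially. measure_pmf.prob (P n) {w. Z n w > \<delta> * sqrt (A n)}
          \<le> K * A n / \<epsilon> + K * C * sqrt (A n) / \<delta>"
        using eventually_ge_at_top[of N] by eventually_elim (rule bnd[OF _ that])
    qed
    have L2: "(\<lambda>n. measure_pmf.prob (P n) {w. Z n w > \<delta> * 1}) \<longlonglongrightarrow> 0" if "\<delta> > 0" for \<delta>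
    proof (rule tendsto_sandwich[OF _ _ tendsto_const ub[of \<delta>]])
      show "\<forall>\<^sub>F n in sequentially. 0 \<le> measure_pmf.prob (P n) {w. Z n w > \<delta> * 1}" by simp
      have ev1: "\<forall>\<^sub>F n in sequentially. sqrt (A n) < 1"
        using order_tendstoD(2)[OF sAl, of 1] by simp
      show "\<forall>\<^sub>F n in sequentially. measure_pmf.prob (P n) {w. Z n w > \<delta> * 1}
          \<le> K * A n / \<epsilon> + K * C * sqrt (A n) / \<delta>"
        using eventually_ge_at_top[of N] ev1
      proof eventually_elim
        case (elim n)
        have "{w. Z n w > \<delta> * 1} \<subseteq> {w. Z n w > \<delta> * sqrt (A n)}"
        proof
          fix w assume "w \<in> {w. Z n w > \<delta> * 1}"
          moreover have "\<delta> * sqrt (A n) \<le> \<delta> * 1" using elim(2) that by (intro mult_left_mono) auto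
          ultimately show "w \<in> {w. Z n w > \<delta> * sqrt (A n)}" by auto
        qed
        then have "measure_pmf.prob (P n) {w. Z n w > \<delta> * 1} \<le> measure_pmf.prob (P n) {w. Z n w > \<delta> * sqrt (A n)}"
          by (intro measure_pmf.finite_measure_mono) auto
        also have "\<dots> \<le> K * A n / \<epsilon> + K * C * sqrt (A n) / \<delta>" by (rule bnd[OF elim(1) that])
        finally show ?case .
      qed
    qed
    show "little_op P (\<lambda>n w. vnorm {..<k} (\<lambda>a. muhat n w a - muL n w a)) (\<lambda>n. sqrt (sp n / real n))
      \<and> little_op P (\<lambda>n w. vnorm {..<k} (\<lambda>a. muhat n w a - muL n w a)) (\<lambda>n. 1)"
      unfolding little_op_def using L1 L2 unfolding Z_def A_def by auto
  qed
  show ?thesis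
    using part1 part3 cov unfolding sp_def S_def by blast
qed


end
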